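(* Let the filtered space and outer-measure notation be as in the context. Let $I_0\in\mathscr D$ and let $h$ be a positive function on $I_0$ with $h,h^{-1}\in L^1(I_0,\nu)$. Define $H$ on $\mathscr D$ by $H(I)=1/\langle h^{-1}\rangle_I$ if $I\in\mathscr D(I_0)$ and $H(I)=0$ otherwise. Then $H\in L^1(\mathscr D,S^\infty)$ and $$\|H\|_{L^1(\mathscr D,S^\infty)}\le 2\|h\|_{L^1(\nu)} .$$
   Context: $(\mathcal X,\mathfrak S,\nu)$ is a $\sigma$-finite measure space with a filtration $(\mathfrak S_n)_{n\in\mathbb Z}$ of atomic $\sigma$-algebras, $\mathfrak S_n\subset\mathfrak S_{n+1}$; $\mathscr D_n$ is the countable disjoint family of atoms (of positive measure) of $\mathfrak S_n$ and $\mathscr D=\bigcup_n\mathscr D_n$; $\mathscr D(I)=\{I'\in\mathscr D:I'\subset I\}$; $|I|=\nu(I)$, $\langle f\rangle_I=|I|^{-1}\int_I f\,d\nu$. Outer measure: $\nu^*(\mathscr D(I))=\nu(I)$ for $I\in\mathscr D$, and for $\mathcal A\subset\mathscr D$, $\nu^*(\mathcal A)=\inf\sum_{I\in\mathcal K}\nu(I)$ over all $\mathcal K\subset\mathscr D$ with $\mathcal A\subset\bigcup_{I\in\mathcal K}\mathscr D(I)$. For $F:\mathscr D\to\mathbb C$, the size is $S^\infty F(\mathscr D(I))=\sup_{I'\in\mathscr D(I)}|F(I')|$. For $\lambda>0$, $\nu^*(S^\infty F>\lambda)=\inf\{\nu^*(\mathcal G):\mathcal G\subset\mathscr D,\ S^\infty(F\mathbf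 1_{\mathscr D\setminus\mathcal G})(\mathscr D(I))\le\lambda\ \forall I\in\mathscr D\}$, and $\|F\|_{L^p(\mathscr D,S^\infty)}=\big(p\int_0^\infty\lambda^{p-1}\nu^*(S^\infty F>\lambda)\,d\lambda\big)^{1/p}$; $L^p(\mathscr D,S^\infty)$ is the set of $F$ with finite norm. *)

theory Defs
  imports "HOL-Analysis.Analysis"
begin

definition is_atom :: "'a set set \<Rightarrow> 'a set \<Rightarrow> bool" where
  "is_atom S A \<longleftrightarrow> A \<in> S \<and> A \<noteq> {} \<and> (\<forall>B\<in>S. B \<subseteq> A \<longrightarrow> B = {} \<or> B = A)"

definition atomic_sigma :: "'a measure \<Rightarrow> 'a set set \<Rightarrow> bool" where
  "atomic_sigma M S \<longleftrightarrow> sigma_algebra (space M) S \<and> S \<subseteq> sets M \<and>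
     (\<forall>x\<in>space M. \<exists>A. is_atom S A \<and> x \<in> A)"

definition atoms :: "'a measure \<Rightarrow> (int \<Rightarrow> 'a set set) \<Rightarrow> int \<Rightarrow> 'a set set" where
  "atoms M S n = {A. is_atom (S n) A \<and> emeasure M A > 0}"

text \<open>Standing assumptions: sigma-finite measure space, filtration of atomic sigma-algebras
  indexed by the integers, countably many atoms of positive measure at each level,
  each of finite measure (so that averages make sense).\<close>
definition atomic_filtration :: "'a measure \<Rightarrow> (int \<Rightarrow> 'a set set) \<Rightarrow> bool" where
  "atomic_filtration M S \<longleftrightarrow> sigma_finite_measure M \<and>
     (\<forall>n. atomic_sigma M (S n)) \<and> (\<forall>n. S n \<subseteq> S (n + 1)) \<and>
     (\<forall>n. countable (atoms M S n)) \<and>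
     (\<forall>n. \<forall>I\<in>atoms M S n. emeasure M I < \<infinity>)"

definition dyad :: "'a measure \<Rightarrow> (int \<Rightarrow> 'a set set) \<Rightarrow> 'a set set" where
  "dyad M S = (\<Union>n. atoms M S n)"

definition tree :: "'a measure \<Rightarrow> (int \<Rightarrow> 'a set set) \<Rightarrow> 'a set \<Rightarrow> 'a set set" where
  "tree M S I = {I' \<in> dyad M S. I' \<subseteq> I}"

definition avg :: "'a measure \<Rightarrow> ('a \<Rightarrow> real) \<Rightarrow> 'a set \<Rightarrow> real" where
  "avg M f I = (1 / measure M I) * (LINT x:I|M. f x)"

text \<open>Sum of nonnegative (extended) terms over a possibly infinite family: sup of finite sums.\<close>
definition outer_measure :: "'a measure \<Rightarrow> (int \<Rightarrow> 'a set set) \<Rightarrow> 'a set set \<Rightarrow> ennreal" where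
  "outer_measure M S A =
     (INF K \<in> {K. K \<subseteq> dyad M S \<and> A \<subseteq> (\<Union>I\<in>K. tree M S I)}.
        (SUP K' \<in> {K'. finite K' \<and> K' \<subseteq> K}. \<Sum>I\<in>K'. emeasure M I))"

definition size_inf :: "'a measure \<Rightarrow> (int \<Rightarrow> 'a set set) \<Rightarrow> ('a set \<Rightarrow> complex) \<Rightarrow> 'a set \<Rightarrow> ennreal" where
  "size_inf M S F I = (SUP I' \<in> tree M S I. ennreal (norm (F I')))"

definition superlevel :: "'a measure \<Rightarrow> (int \<Rightarrow> 'a set set) \<Rightarrow> ('a set \<Rightarrow> complex) \<Rightarrow> real \<Rightarrow> ennreal" where
  "superlevel M S F t =
     (INF G \<in> {G. G \<subseteq> dyad M S \<and>
        (\<forall>I\<in>dyad M S. size_inf M S (\<lambda>J. if J \<in> dyad M S - G then F J else 0) I \<le> ennreal t)}.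
        outer_measure M S G)"

definition outer_Lp_integral :: "real \<Rightarrow> 'a measure \<Rightarrow> (int \<Rightarrow> 'a set set) \<Rightarrow> ('a set \<Rightarrow> complex) \<Rightarrow> ennreal" where
  "outer_Lp_integral p M S F =
     (\<integral>\<^sup>+ t. indicator {0<..} t * ennreal (p * t powr (p - 1)) * superlevel M S F t \<partial>lborel)"

definition outer_Lp_norm :: "real \<Rightarrow> 'a measure \<Rightarrow> (int \<Rightarrow> 'a set set) \<Rightarrow> ('a set \<Rightarrow> complex) \<Rightarrow> ennreal" where
  "outer_Lp_norm p M S F =
     (if outer_Lp_integral p M S F = \<infinity> then \<infinity>
      else ennreal (enn2real (outer_Lp_integral p M S F) powr (1 / p)))"

definition outer_Lp :: "real \<Rightarrow> 'a measure \<Rightarrow> (int \<Rightarrow> 'a set set) \<Rightarrow> ('a set \<Rightarrow> complex) set" where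
  "outer_Lp p M S = {F. outer_Lp_norm p M S F < \<infinity>}"

end

theory Submission
  imports Defs
begin

lemma sa_Int: "sigma_algebra \<Omega> A \<Longrightarrow> a \<in> A \<Longrightarrow> b \<in> A \<Longrightarrow> a \<inter> b \<in> A"
  using Dynkin_system.sigma_algebra_eq_Int_stable Int_stableD
    sigma_algebra_imp_Dynkin_system by blast

lemma S_mono:
  assumes "atomic_filtration M S" "m \<le> n"
  shows "S m \<subseteq> S n"
proof -
  obtain k where k: "n = m + int k" using assms(2) by (metis le_iff_add zle_iff_zadd)
  have "S m \<subseteq> S (m + int k)" for k
  proof (induction k)
    case 0 then show ?case by simp
  next
    case (Suc k)
    have "S (m + int k) \<subseteq> S (m + int k + 1)" using assms(1) unfolding atomic_filtration_def by blast
    moreover have "m + int (Suc k) = m + int k + 1" by simp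
    ultimately show ?case using Suc by (metis order_trans)
  qed
  then show ?thesis using k by simp
qed

lemma atom_sets:
  assumes "atomic_filtration M S" "I \<in> atoms M S n"
  shows "I \<in> S n" "I \<in> sets M" "I \<noteq> {}" "emeasure M I > 0" "emeasure M I < \<infinity>"
  using assms unfolding atomic_filtration_def atoms_def is_atom_def atomic_sigma_def by auto

lemma dyad_props:
  assumes "atomic_filtration M S" "I \<in> dyad M S"
  shows "I \<in> sets M" "I \<noteq> {}" "emeasure M I > 0" "emeasure M I < \<infinity>"
proof -
  obtain n where "I \<in> atoms M S n" using assms(2) unfolding dyad_def by auto
  then show "I \<in> sets M" "I \<noteq> {}" "emeasure M I > 0" "emeasure M I < \<infinity>"
    using atom_sets[OF assms(1)] by auto
qed

lemma atom_le:
  assumes "atomic_filtration M S" "I \<in> atoms M S n" "J \<in> atoms M S m" "n \<le> m"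
  shows "J \<subseteq> I \<or> I \<inter> J = {}"
proof -
  have "I \<in> S m" using S_mono[OF assms(1,4)] atom_sets[OF assms(1,2)] by auto
  moreover have "J \<in> S m" using atom_sets[OF assms(1,3)] by auto
  moreover have sa: "sigma_algebra (space M) (S m)" using assms(1) unfolding atomic_filtration_def atomic_sigma_def by auto
  ultimately have "I \<inter> J \<in> S m" using sa_Int by blast
  moreover have "is_atom (S m) J" using assms(3) unfolding atoms_def by auto
  ultimately have "I \<inter> J = {} \<or> I \<inter> J = J" unfolding is_atom_def by blast
  then show ?thesis by blast
qed

lemma dyad_nested:
  assumes "atomic_filtration M S" "I \<in> dyad M S" "J \<in> dyad M S"
  shows "I \<subseteq> J \<or> J \<subseteq> I \<or> I \<inter> J = {}"
proof -
  obtain n m where n: "I \<in> atoms M S n" and m: "J \<in> atoms M S m" using assms unfolding dyad_def by auto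
  show ?thesis
  proof (cases "n \<le> m")
    case True then show ?thesis using atom_le[OF assms(1) n m] by blast
  next
    case False then show ?thesis using atom_le[OF assms(1) m n] by auto
  qed
qed

lemma finite_above:
  assumes af: "atomic_filtration M S" and I0: "I0 \<in> dyad M S" and I: "I \<in> tree M S I0"
  shows "finite {J \<in> tree M S I0. I \<subseteq> J}"
proof -
  obtain n0 where n0: "I0 \<in> atoms M S n0" using I0 unfolding dyad_def by auto
  obtain k where k: "I \<in> atoms M S k" using I unfolding tree_def dyad_def by auto
  obtain x where x: "x \<in> I" using atom_sets(3)[OF af k] by blast
  define A where "A m = (SOME A. is_atom (S m) A \<and> x \<in> A)" for m
  have "{J \<in> tree M S I0. I \<subseteq> J} \<subseteq> {I0, I} \<union> A ` {n0<..<k}"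
  proof
    fix J assume J: "J \<in> {J \<in> tree M S I0. I \<subseteq> J}"
    then obtain m where m: "J \<in> atoms M S m" and JI0: "J \<subseteq> I0" and IJ: "I \<subseteq> J"
      unfolding tree_def dyad_def by auto
    show "J \<in> {I0, I} \<union> A ` {n0<..<k}"
    proof (cases "m \<le> n0")
      case True
      have "I0 \<subseteq> J \<or> J \<inter> I0 = {}" using atom_le[OF af m n0 True] .
      moreover have "J \<noteq> {}" using atom_sets(3)[OF af m] .
      ultimately show ?thesis using JI0 by auto
    next
      case c1: False
      show ?thesis
      proof (cases "k \<le> m")
        case True
        have "J \<subseteq> I \<or> I \<inter> J = {}" using atom_le[OF af k m True] .
        then show ?thesis using IJ x by auto
      next
        case False
        have ex: "is_atom (S m) J \<and> x \<in> J" using m IJ x unfolding atoms_def by auto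
        then have Am: "is_atom (S m) (A m) \<and> x \<in> A m" unfolding A_def by (rule someI)
        have "A m \<in> S m" "J \<in> S m" using Am ex unfolding is_atom_def by auto
        moreover have sa: "sigma_algebra (space M) (S m)" using af unfolding atomic_filtration_def atomic_sigma_def by auto
        ultimately have "A m \<inter> J \<in> S m" using sa_Int by blast
        then have "A m \<inter> J = {} \<or> A m \<inter> J = J" "A m \<inter> J = {} \<or> A m \<inter> J = A m"
          using Am ex unfolding is_atom_def by auto
        then have "J = A m" using Am ex by blast
        then show ?thesis using c1 False by auto
      qed
    qed
  qed
  then show ?thesis by (rule finite_subset) auto
qed

lemma ennreal_half_bound:
  fixes m a :: real and P :: ennreal
  assumes "ennreal m \<le> P + ennreal a" "a \<le> m / 2" "0 \<le> a"
  shows "ennreal m \<le> 2 * P"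
proof (cases "P = top")
  case True then show ?thesis by (simp add: ennreal_mult_top)
next
  case False
  then obtain r where r: "P = ennreal r" "r \<ge> 0" by (cases P) auto
  have e: "ennreal r + ennreal a = ennreal (r + a)" using r assms by (simp add: ennreal_plus)
  have "ennreal m \<le> ennreal (r + a)" using assms(1) r(1) e by simp
  then have "m \<le> r + a" using r assms by (subst (asm) ennreal_le_iff) auto
  then have "m \<le> 2 * r" using assms by simp
  then have "ennreal m \<le> ennreal (2 * r)" by (rule ennreal_leI)
  then show ?thesis using r by (simp add: ennreal_mult)
qed

lemma cube_bound:
  assumes af: "atomic_filtration M S" and I: "I \<in> dyad M S" "I \<subseteq> I0"
    and pos: "\<forall>x\<in>I0. h x > 0"
    and iinv: "set_integrable M I0 (\<lambda>x. 1 / h x)" and t: "t > 0"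
    and big: "norm (complex_of_real (1 / avg M (\<lambda>x. 1/h x) I)) > t"
    and hm[measurable]: "(\<lambda>x. indicator I0 x * h x) \<in> borel_measurable M"
  shows "emeasure M I \<le> 2 * (\<integral>\<^sup>+x. indicator I x * ennreal (max 0 (1 - t/(2*(indicator I0 x * h x)))) \<partial>M)"
proof -
  note Iprops = dyad_props[OF af I(1)]
  have Is[measurable]: "I \<in> sets M" using Iprops by auto
  define m where "m = measure M I"
  have em: "emeasure M I = ennreal m" unfolding m_def using Iprops by (simp add: emeasure_eq_ennreal_measure)
  have "m \<noteq> 0" using Iprops(3) em by auto
  then have mpos: "m > 0" using measure_nonneg[of M I] unfolding m_def by linarith
  have iI: "set_integrable M I (\<lambda>x. 1 / h x)" using set_integrable_subset[OF iinv Is I(2)] .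
  then have iI': "integrable M (\<lambda>x. indicator I x *\<^sub>R (1 / h x))" unfolding set_integrable_def .
  define A where "A = (LINT x:I|M. 1 / h x)"
  have A_def': "A = (LINT x|M. indicator I x *\<^sub>R (1 / h x))" unfolding A_def set_lebesgue_integral_def ..
  have Anonneg: "A \<ge> 0" unfolding A_def'
  proof (rule integral_nonneg_AE, rule AE_I2)
    fix x show "0 \<le> indicator I x *\<^sub>R (1 / h x)"
      using pos I(2) by (cases "x \<in> I") (auto simp: less_imp_le)
  qed
  have avg: "avg M (\<lambda>x. 1/h x) I = A / m" unfolding avg_def A_def m_def by simp
  have "\<bar>1 / (A / m)\<bar> > t" using big unfolding avg norm_of_real .
  then have "A \<noteq> 0" using t by auto
  then have "m / A > t" using \<open>\<bar>1 / (A / m)\<bar> > t\<close> Anonneg mpos by simp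
  then have tA: "t * A < m" using Anonneg \<open>A \<noteq> 0\<close> by (simp add: field_simps)
  define \<phi> where "\<phi> x = ennreal (max 0 (1 - t/(2*(indicator I0 x * h x))))" for x
  have \<phi>m[measurable]: "\<phi> \<in> borel_measurable M" unfolding \<phi>_def by measurable
  have pt: "indicator I x \<le> indicator I x * \<phi> x + ennreal (t/2 * (indicator I x *\<^sub>R (1 / h x)))" for x
  proof (cases "x \<in> I")
    case True
    then have hx: "h x > 0" "x \<in> I0" using pos I(2) by auto
    have eq: "t/2 * (1/h x) = t/(2*h x)" by simp
    have "1 \<le> max 0 (1 - t/(2*h x)) + t/2 * (1/h x)" unfolding eq by linarith
    then have "ennreal 1 \<le> ennreal (max 0 (1 - t/(2*h x)) + t/2 * (1/h x))" by (rule ennreal_leI)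
    also have "\<dots> = ennreal (max 0 (1 - t/(2*h x))) + ennreal (t/2 * (1/h x))"
      using hx t by (intro ennreal_plus) auto
    finally show ?thesis using True hx unfolding \<phi>_def by simp
  qed simp
  have "emeasure M I = (\<integral>\<^sup>+x. indicator I x \<partial>M)" by simp
  also have "\<dots> \<le> (\<integral>\<^sup>+x. indicator I x * \<phi> x + ennreal (t/2 * (indicator I x *\<^sub>R (1 / h x))) \<partial>M)"
    by (rule nn_integral_mono) (rule pt)
  also have "\<dots> = (\<integral>\<^sup>+x. indicator I x * \<phi> x \<partial>M) + (\<integral>\<^sup>+x. ennreal (t/2 * (indicator I x *\<^sub>R (1 / h x))) \<partial>M)"
  proof (rule nn_integral_add)
    have [measurable]: "(\<lambda>x. indicator I x *\<^sub>R (1 / h x)) \<in> borel_measurable M"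
      using iI' by (rule borel_measurable_integrable)
    show "(\<lambda>x. ennreal (t/2 * (indicator I x *\<^sub>R (1 / h x)))) \<in> borel_measurable M" by measurable
  qed measurable
  also have "(\<integral>\<^sup>+x. ennreal (t/2 * (indicator I x *\<^sub>R (1 / h x))) \<partial>M) = ennreal (t/2 * A)"
  proof -
    have "(\<integral>\<^sup>+x. ennreal (t/2 * (indicator I x *\<^sub>R (1 / h x))) \<partial>M) = ennreal (LINT x|M. t/2 * (indicator I x *\<^sub>R (1 / h x)))"
      using iI' pos I(2) t by (intro nn_integral_eq_integral integrable_mult_right AE_I2) (auto split: split_indicator intro!: divide_nonneg_pos)
    also have "(LINT x|M. t/2 * (indicator I x *\<^sub>R (1 / h x))) = t/2 * A"
      unfolding A_def' by (rule integral_mult_right_zero)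
    finally show ?thesis .
  qed
  finally have "ennreal m \<le> (\<integral>\<^sup>+x. indicator I x * \<phi> x \<partial>M) + ennreal (t/2 * A)" using em by simp
  then have "ennreal m \<le> 2 * (\<integral>\<^sup>+x. indicator I x * \<phi> x \<partial>M)"
    by (rule ennreal_half_bound) (use tA t Anonneg in auto)
  then show ?thesis using em unfolding \<phi>_def by simp
qed

lemma superlevel_bound:
  assumes af: "atomic_filtration M S" and I0: "I0 \<in> dyad M S"
    and pos: "\<forall>x\<in>I0. h x > 0"
    and iinv: "set_integrable M I0 (\<lambda>x. 1 / h x)" and t: "t > 0"
    and Hdef: "\<And>I. H I = (if I \<in> tree M S I0 then complex_of_real (1 / avg M (\<lambda>x. 1 / h x) I) else 0)"
    and hm[measurable]: "(\<lambda>x. indicator I0 x * h x) \<in> borel_measurable M"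
  shows "superlevel M S H t \<le> 2 * (\<integral>\<^sup>+x. indicator I0 x * ennreal (max 0 (1 - t/(2*(indicator I0 x * h x)))) \<partial>M)"
proof -
  define G where "G = {I \<in> tree M S I0. norm (H I) > t}"
  define K where "K = {J \<in> G. \<forall>J'\<in>G. J \<subseteq> J' \<longrightarrow> J' = J}"
  define \<phi> where "\<phi> x = ennreal (max 0 (1 - t/(2*(indicator I0 x * h x))))" for x
  have \<phi>m[measurable]: "\<phi> \<in> borel_measurable M" unfolding \<phi>_def by measurable
  have Gd: "G \<subseteq> dyad M S" unfolding G_def tree_def by auto
  have sl: "superlevel M S H t \<le> outer_measure M S G"
    unfolding superlevel_def
  proof (rule INF_lower, safe)
    fix I assume "I \<in> G" then show "I \<in> dyad M S" using Gd by auto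
  next
    fix I assume "I \<in> dyad M S"
    show "size_inf M S (\<lambda>J. if J \<in> dyad M S - G then H J else 0) I \<le> ennreal t"
      unfolding size_inf_def
    proof (rule SUP_least)
      fix I' assume "I' \<in> tree M S I"
      have "norm (if I' \<in> dyad M S - G then H I' else 0) \<le> t"
        using t by (auto simp: G_def Hdef[of I'] simp del: norm_of_real)
      then show "ennreal (norm (if I' \<in> dyad M S - G then H I' else 0)) \<le> ennreal t"
        by (rule ennreal_leI)
    qed
  qed
  have cover: "\<exists>J\<in>K. I \<subseteq> J" if IG: "I \<in> G" for I
  proof -
    define C where "C = {J \<in> G. I \<subseteq> J}"
    have "C \<subseteq> {J \<in> tree M S I0. I \<subseteq> J}" unfolding C_def G_def by auto
    moreover have "finite {J \<in> tree M S I0. I \<subseteq> J}"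
      using finite_above[OF af I0] IG unfolding G_def by auto
    ultimately have "finite C" by (rule finite_subset)
    moreover have "C \<noteq> {}" using IG unfolding C_def by auto
    ultimately obtain m where mC: "m \<in> C" and mmax: "\<forall>b\<in>C. m \<le> b \<longrightarrow> m = b"
      using finite_has_maximal by blast
    have "m \<in> K" unfolding K_def
    proof (safe)
      show "m \<in> G" using mC unfolding C_def by auto
    next
      fix J' x assume "J' \<in> G" "m \<subseteq> J'" "x \<in> J'"
      then have "J' \<in> C" using mC unfolding C_def by auto
      then have "m = J'" using mmax \<open>m \<subseteq> J'\<close> by auto
      then show "x \<in> m" using \<open>x \<in> J'\<close> by simp
    qed
    then show ?thesis using mC unfolding C_def by auto
  qed
  have disj: "J1 \<inter> J2 = {}" if "J1 \<in> K" "J2 \<in> K" "J1 \<noteq> J2" for J1 J2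
  proof -
    have "J1 \<in> dyad M S" "J2 \<in> dyad M S" using that Gd unfolding K_def by auto
    from dyad_nested[OF af this] that show ?thesis unfolding K_def by auto
  qed
  have "outer_measure M S G \<le> (SUP K' \<in> {K'. finite K' \<and> K' \<subseteq> K}. \<Sum>I\<in>K'. emeasure M I)"
    unfolding outer_measure_def
  proof (rule INF_lower, safe)
    fix J assume "J \<in> K" then show "J \<in> dyad M S" using Gd unfolding K_def by auto
  next
    fix I assume "I \<in> G"
    then obtain J where "J \<in> K" "I \<subseteq> J" using cover by blast
    moreover have "I \<in> dyad M S" using \<open>I \<in> G\<close> Gd by auto
    ultimately show "I \<in> (\<Union>J\<in>K. tree M S J)" unfolding tree_def by auto
  qed
  also have "\<dots> \<le> 2 * (\<integral>\<^sup>+x. indicator I0 x * \<phi> x \<partial>M)"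
  proof (rule SUP_least, safe)
    fix K' assume fin: "finite K'" and KK: "K' \<subseteq> K"
    have KG: "J \<in> tree M S I0" "norm (H J) > t" if "J \<in> K'" for J
      using that KK unfolding K_def G_def by auto
    have Jsets[measurable]: "J \<in> sets M" if "J \<in> K'" for J
      using KG(1)[OF that] dyad_props[OF af] unfolding tree_def by auto
    have "(\<Sum>I\<in>K'. emeasure M I) \<le> (\<Sum>I\<in>K'. 2 * (\<integral>\<^sup>+x. indicator I x * \<phi> x \<partial>M))"
    proof (rule sum_mono)
      fix I assume "I \<in> K'"
      then have "I \<in> dyad M S" "I \<subseteq> I0" "norm (complex_of_real (1 / avg M (\<lambda>x. 1/h x) I)) > t"
        using KG[of I] unfolding tree_def Hdef[of I] by auto
      from cube_bound[OF af this(1,2) pos iinv t this(3) hm]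
      show "emeasure M I \<le> 2 * (\<integral>\<^sup>+x. indicator I x * \<phi> x \<partial>M)" unfolding \<phi>_def .
    qed
    also have "\<dots> = 2 * (\<integral>\<^sup>+x. (\<Sum>I\<in>K'. indicator I x * \<phi> x) \<partial>M)"
      by (subst nn_integral_sum) (auto simp: sum_distrib_left)
    also have "\<dots> \<le> 2 * (\<integral>\<^sup>+x. indicator I0 x * \<phi> x \<partial>M)"
    proof (intro mult_left_mono nn_integral_mono)
      fix x
      have "(\<Sum>I\<in>K'. indicator I x * \<phi> x) = (\<Sum>I\<in>K'. indicator I x) * \<phi> x"
        by (simp add: sum_distrib_right)
      also have "(\<Sum>I\<in>K'. indicator I x) = (indicator (\<Union>K') x :: ennreal)"
      proof -
        have "disjoint_family_on (\<lambda>I. I) K'" unfolding disjoint_family_on_def using disj KK by auto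
        then have "(indicator (\<Union>((\<lambda>I. I) ` K')) x :: ennreal) = (\<Sum>y\<in>K'. indicator y x)"
          by (rule indicator_UN_disjoint[OF fin])
        then show ?thesis by simp
      qed
      also have "\<dots> \<le> indicator I0 x"
        using KG(1) unfolding tree_def by (auto split: split_indicator)
      finally show "(\<Sum>I\<in>K'. indicator I x * \<phi> x) \<le> indicator I0 x * \<phi> x"
        by (simp add: mult_right_mono)
    qed simp
    finally show "(\<Sum>I\<in>K'. emeasure M I) \<le> 2 * (\<integral>\<^sup>+x. indicator I0 x * \<phi> x \<partial>M)" .
  qed
  finally have "outer_measure M S G \<le> 2 * (\<integral>\<^sup>+x. indicator I0 x * \<phi> x \<partial>M)" .
  from order_trans[OF sl this] show ?thesis unfolding \<phi>_def .
qed

lemma inner_int: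
  fixes c :: real assumes c: "c > 0"
  shows "(\<integral>\<^sup>+t. indicator {0<..} t * ennreal (max 0 (1 - t/(2*c))) \<partial>lborel) = ennreal c"
proof -
  have "(\<integral>\<^sup>+t. indicator {0<..} t * ennreal (max 0 (1 - t/(2*c))) \<partial>lborel)
      = (\<integral>\<^sup>+t. ennreal (1 - t/(2*c)) * indicator {0..2*c} t \<partial>lborel)"
  proof (rule nn_integral_cong_AE)
    show "AE t in lborel. indicator {0<..} t * ennreal (max 0 (1 - t/(2*c))) = ennreal (1 - t/(2*c)) * indicator {0..2*c} t"
      using AE_lborel_singleton[of 0]
    proof (rule AE_mp, intro AE_I2 impI)
      fix t :: real assume "t \<noteq> 0"
      show "indicator {0<..} t * ennreal (max 0 (1 - t/(2*c))) = ennreal (1 - t/(2*c)) * indicator {0..2*c} t"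
      proof (cases "t < 0")
        case True then show ?thesis by (simp add: indicator_def)
      next
        case False
        then have t0: "t > 0" using \<open>t \<noteq> 0\<close> by simp
        show ?thesis
        proof (cases "t \<le> 2*c")
          case True
          then have "1 - t/(2*c) \<ge> 0" using c by (simp add: field_simps)
          then show ?thesis using t0 True by (simp add: indicator_def)
        next
          case False
          then have "1 - t/(2*c) < 0" using c by (simp add: field_simps)
          then show ?thesis using t0 False by (simp add: indicator_def max_def ennreal_neg)
        qed
      qed
    qed
  qed
  also have "\<dots> = ennreal ((2*c - (2*c)^2/(4*c)) - (0 - 0^2/(4*c)))"
  proof (rule nn_integral_FTC_Icc)
    show "(\<lambda>t. 1 - t/(2*c)) \<in> borel_measurable borel" by measurable
  next
    fix t assume "t \<in> {0..2*c}"
    show "((\<lambda>t. t - t^2/(4*c)) has_real_derivative 1 - t/(2*c)) (at t)"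
      using c by (auto intro!: derivative_eq_intros simp: field_simps power2_eq_square)
  next
    fix t assume "t \<in> {0..2*c}"
    then show "0 \<le> 1 - t/(2*c)" using c by (simp add: field_simps)
  qed (use c in auto)
  also have "(2*c - (2*c)^2/(4*c)) - (0 - 0^2/(4*c)) = c" using c by (simp add: field_simps power2_eq_square)
  finally show ?thesis .
qed

theorem lemma4p2:
  fixes M :: "'a measure" and S :: "int \<Rightarrow> 'a set set"
    and I0 :: "'a set" and h :: "'a \<Rightarrow> real" and H :: "'a set \<Rightarrow> complex"
  assumes "atomic_filtration M S"
    and "I0 \<in> dyad M S"
    and "\<forall>x\<in>I0. h x > 0"
    and "set_integrable M I0 h"
    and "set_integrable M I0 (\<lambda>x. 1 / h x)"
    and "\<And>I. H I = (if I \<in> tree M S I0 then complex_of_real (1 / avg M (\<lambda>x. 1 / h x) I) else 0)"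
  shows "H \<in> outer_Lp 1 M S \<and>
         outer_Lp_norm 1 M S H \<le> ennreal (2 * (LINT x:I0|M. \<bar>h x\<bar>))"
proof -
  note af = assms(1) and I0 = assms(2) and pos = assms(3) and ih = assms(4) and iinv = assms(5)
    and Hdef = assms(6)
  have I0s[measurable]: "I0 \<in> sets M" using dyad_props[OF af I0] by auto
  have ih': "integrable M (\<lambda>x. indicator I0 x * h x)" using ih unfolding set_integrable_def by simp
  have hm[measurable]: "(\<lambda>x. indicator I0 x * h x) \<in> borel_measurable M"
    using ih' by (rule borel_measurable_integrable)
  define g where "g x = indicator I0 x * h x" for x
  have gm[measurable]: "g \<in> borel_measurable M" unfolding g_def by (rule hm)
  define f where "f x t = indicator I0 x * ennreal (max 0 (1 - t/(2*g x))) * indicator {0<..} t" for x and t :: real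
  have fm: "case_prod f \<in> borel_measurable (M \<Otimes>\<^sub>M lborel)" unfolding f_def by measurable
  have sfM: "sigma_finite_measure M" using af unfolding atomic_filtration_def by auto
  have psf: "pair_sigma_finite M lborel"
    unfolding pair_sigma_finite_def using sfM lborel.sigma_finite_measure_axioms by simp
  define L where "L = (LINT x:I0|M. \<bar>h x\<bar>)"
  have L: "(\<integral>\<^sup>+x. ennreal (g x) \<partial>M) = ennreal L"
  proof -
    have "(\<integral>\<^sup>+x. ennreal (g x) \<partial>M) = ennreal (LINT x|M. g x)"
      using ih' pos unfolding g_def
      by (intro nn_integral_eq_integral AE_I2) (auto split: split_indicator simp: less_imp_le)
    also have "(LINT x|M. g x) = L" unfolding L_def set_lebesgue_integral_def g_def
      using pos by (intro Bochner_Integration.integral_cong) (auto split: split_indicator)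
    finally show ?thesis .
  qed
  have "outer_Lp_integral 1 M S H \<le> (\<integral>\<^sup>+t. indicator {0<..} t * (2 * (\<integral>\<^sup>+x. indicator I0 x * ennreal (max 0 (1 - t/(2*g x))) \<partial>M)) \<partial>lborel)"
    unfolding outer_Lp_integral_def
  proof (rule nn_integral_mono)
    fix t :: real
    show "indicator {0<..} t * ennreal (1 * t powr (1 - 1)) * superlevel M S H t
      \<le> indicator {0<..} t * (2 * (\<integral>\<^sup>+x. indicator I0 x * ennreal (max 0 (1 - t/(2*g x))) \<partial>M))"
    proof (cases "t > 0")
      case True
      have "superlevel M S H t \<le> 2 * (\<integral>\<^sup>+x. indicator I0 x * ennreal (max 0 (1 - t/(2*g x))) \<partial>M)"
        using superlevel_bound[OF af I0 pos iinv True Hdef hm] unfolding g_def .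
      then show ?thesis using True by simp
    qed simp
  qed
  also have "\<dots> = 2 * (\<integral>\<^sup>+t. (\<integral>\<^sup>+x. f x t \<partial>M) \<partial>lborel)"
  proof -
    have "(\<integral>\<^sup>+t. indicator {0<..} t * (2 * (\<integral>\<^sup>+x. indicator I0 x * ennreal (max 0 (1 - t/(2*g x))) \<partial>M)) \<partial>lborel)
       = (\<integral>\<^sup>+t. 2 * (\<integral>\<^sup>+x. f x t \<partial>M) \<partial>lborel)"
    proof (rule nn_integral_cong)
      fix t :: real
      have "(\<integral>\<^sup>+x. f x t \<partial>M) = (\<integral>\<^sup>+x. indicator I0 x * ennreal (max 0 (1 - t/(2*g x))) \<partial>M) * indicator {0<..} t"
        unfolding f_def by (rule nn_integral_multc) measurable
      then show "indicator {0<..} t * (2 * (\<integral>\<^sup>+x. indicator I0 x * ennreal (max 0 (1 - t/(2*g x))) \<partial>M))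
          = 2 * (\<integral>\<^sup>+x. f x t \<partial>M)" by (simp add: ac_simps)
    qed
    also have "\<dots> = 2 * (\<integral>\<^sup>+t. (\<integral>\<^sup>+x. f x t \<partial>M) \<partial>lborel)"
    proof (rule nn_integral_cmult)
      show "(\<lambda>t. \<integral>\<^sup>+x. f x t \<partial>M) \<in> borel_measurable lborel"
      proof -
        have "(\<lambda>(t,x). f x t) \<in> borel_measurable (lborel \<Otimes>\<^sub>M M)" unfolding f_def by measurable
        then show ?thesis by (rule sigma_finite_measure.borel_measurable_nn_integral[OF sfM])
      qed
    qed
    finally show ?thesis .
  qed
  also have "(\<integral>\<^sup>+t. (\<integral>\<^sup>+x. f x t \<partial>M) \<partial>lborel) = (\<integral>\<^sup>+x. (\<integral>\<^sup>+t. f x t \<partial>lborel) \<partial>M)"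
    by (rule pair_sigma_finite.Fubini'[OF psf fm])
  also have "\<dots> = (\<integral>\<^sup>+x. ennreal (g x) \<partial>M)"
  proof (rule nn_integral_cong)
    fix x
    show "(\<integral>\<^sup>+t. f x t \<partial>lborel) = ennreal (g x)"
    proof (cases "x \<in> I0")
      case True
      then have gx: "g x = h x" "h x > 0" using pos unfolding g_def by auto
      have "(\<integral>\<^sup>+t. f x t \<partial>lborel) = (\<integral>\<^sup>+t. indicator {0<..} t * ennreal (max 0 (1 - t/(2*h x))) \<partial>lborel)"
        unfolding f_def using True gx by (intro nn_integral_cong) (simp add: ac_simps)
      also have "\<dots> = ennreal (h x)" by (rule inner_int[OF gx(2)])
      finally show ?thesis using gx by simp
    next
      case False
      then show ?thesis unfolding f_def g_def by simp
    qed
  qed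
  also have "\<dots> = ennreal L" by (rule L)
  finally have int_le: "outer_Lp_integral 1 M S H \<le> 2 * ennreal L" .
  have Lnn: "L \<ge> 0" unfolding L_def set_lebesgue_integral_def
    by (rule integral_nonneg_AE, rule AE_I2) (auto split: split_indicator)
  have bound: "2 * ennreal L = ennreal (2 * L)" using Lnn by (simp add: ennreal_mult)
  have fin: "outer_Lp_integral 1 M S H \<noteq> \<infinity>" using int_le bound
    by (metis ennreal_less_top infinity_ennreal_def less_le_trans order.strict_iff_not top_greatest)
  have norm_eq: "outer_Lp_norm 1 M S H = outer_Lp_integral 1 M S H"
    using fin unfolding outer_Lp_norm_def by (simp add: ennreal_enn2real_if)
  show ?thesis
    unfolding outer_Lp_def using norm_eq fin int_le bound L_def
    by (simp add: less_top[symmetric])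
qed

end
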